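(* In the standing setting, let $(A,B,R,\sigma)$ be a normalized context and $(g,f)\in\mathcal{FC}$ with $g^{\uparrow}\ne f_\bot$ and $f^{\downarrow}\ne g_\bot$. Then $\langle f^{\downarrow},f\rangle$ and $\langle g,g^{\uparrow}\rangle$ belong to $\mathcal M$ and $\langle f^{\downarrow},f\rangle\preceq\langle g,g^{\uparrow}\rangle$ (equivalently, $f^{\downarrow}\preceq_2 g$ pointwise).
   Context: Adjoint triple: for posets $(P_1,\le_1),(P_2,\le_2),(P_3,\le_3)$, maps $\&\colon P_1\times P_2\to P_3$, $\swarrow\colon P_3\times P_2\to P_1$, $\nwarrow\colon P_3\times P_1\to P_2$ with $x\le_1 z\swarrow y \iff x\,\&\,y\le_3 z \iff y\le_2 z\nwarrow x$ for all $x,y,z$. For lower-bounded posets, $\&$ has zero-divisors if there are $x\ne\bot_1$, $y\neq\bot_2$ with $x\,\&\,y=\bot_3$. Standing setting: $(L_1,\preceq_1,\bot_1,\top_1)$ and $(L_2,\preceq_2,\bot_2,\top_2)$ are complete lattices and $(P,\le,\bot,\top)$ is a bounded poset. A multi-adjoint frame consists of adjoint triples $(\&_i,\swarrow^i,\nwarrow_i)$, $i=1,\dots,n$, with respect to $L_1,L_2,P$; a property-oriented frame consists of adjoint triples $(\&^p_j,\swarrow_p^j,\nwarrow^p_j)$, $j=1,\dots,m$, with respect to $P,L_2,L_1$; an object-oriented frame consists of adjoint triples $(\&^o_k,\swarrow_o^k,\nwarrow^o_k)$, $k=1,\dots,s$, with respect to $L_1,P,L_2$. All conjunctors $\&_i,\&^p_j,\&^o_k$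 have no zero-divisors. A context $(A,B,R,\sigma)$ consists of non-empty sets $A,B$, $R\colon A\times B\to P$, and maps $\sigma,\sigma_p,\sigma_o$ from $A\times B$ to the index sets of the three frames. It is normalized if every $a\in A$ has $b_1,b_2\in B$ with $R(a,b_1)\ne\bot$, $R(a,b_2)=\bot$, and every $b\in B$ has $a_1,a_2\in A$ with $R(a_1,b)\neq\bot$, $R(a_2,b)=\bot$. Concept-forming operators: $g^{\uparrow}(a)=\inf\{R(a,b)\swarrow^{\sigma(a,b)}g(b)\mid b\in B\}$ for $g\in L_2^B$ and $f^{\downarrow}(b)=\inf\{R(a,b)\nwarrow_{\sigma(a,b)}f(a)\mid a\in A\}$ for $f\in L_1^A$. Multi-adjoint concept lattice $\mathcal M=\{\langle g,f\rangle\mid g\in L_2^B,f\in L_1^A,\ g^{\uparrow}=f,\ f^{\downarrow}=g\}$, ordered by $\langle g_1,f_1\rangle\preceq\langle g_2,f_2\rangle$ iff $g_1\preceq_2 g_2$ pointwise. Fuzzy necessity operators: $g^{\uparrow_N}(a)=\inf\{g(b)\swarrow_o^{\sigma_o(a,b)}R(a,b)\mid b\in B\}$ and $f^{\downarrow^N}(b)=\inf\{f(a)\nwarrow^p_{\sigma_p(a,b)}R(a,b)\mid a\in A\}$. $\mathcal F_N=\{(g,f)\mid g\in L_2^B,\ f\in L_1^A,\ g^{\uparrow_N}=f,\ f^{\downarrow^N}=g\}$. For $X\subseteq B$, $\chi_X\in L_2^B$ takes value $\top_2$ on $X$ and $\bot_2$ elsewhere; for $Y\subseteq A$, $\chi_Y\in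 L_1^A$ takes value $\top_1$ on $Y$ and $\bot_1$ elsewhere. $\mathcal{FC}=\{(\chi_X,\chi_Y)\in\mathcal F_N\mid \varnothing\ne X\subsetneq B,\ \varnothing\neq Y\subsetneq A\}$. $g_\bot\in L_2^B$, $f_\bot\in L_1^A$ are the constant maps with values $\bot_2,\bot_1$. *)

theory Defs
  imports Main
begin

definition adjoint_triple ::
  "('p1::order \<Rightarrow> 'p2::order \<Rightarrow> 'p3::order) \<Rightarrow> ('p3 \<Rightarrow> 'p2 \<Rightarrow> 'p1) \<Rightarrow> ('p3 \<Rightarrow> 'p1 \<Rightarrow> 'p2) \<Rightarrow> bool"
where
  "adjoint_triple cj sw nw \<longleftrightarrow>
     (\<forall>x y z. (x \<le> sw z y \<longleftrightarrow> cj x y \<le> z) \<and> (cj x y \<le> z \<longleftrightarrow> y \<le> nw z x))"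

definition no_zero_divisors ::
  "('p1::order_bot \<Rightarrow> 'p2::order_bot \<Rightarrow> 'p3::order_bot) \<Rightarrow> bool"
where
  "no_zero_divisors cj \<longleftrightarrow> (\<forall>x y. x \<noteq> bot \<longrightarrow> y \<noteq> bot \<longrightarrow> cj x y \<noteq> bot)"

definition frame ::
  "nat \<Rightarrow> (nat \<Rightarrow> 'p1::order_bot \<Rightarrow> 'p2::order_bot \<Rightarrow> 'p3::order_bot) \<Rightarrow>
   (nat \<Rightarrow> 'p3 \<Rightarrow> 'p2 \<Rightarrow> 'p1) \<Rightarrow> (nat \<Rightarrow> 'p3 \<Rightarrow> 'p1 \<Rightarrow> 'p2) \<Rightarrow> bool"
where
  "frame n cj sw nw \<longleftrightarrow>
     (\<forall>i\<in>{1..n}. adjoint_triple (cj i) (sw i) (nw i) \<and> no_zero_divisors (cj i))"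

text \<open>Normalized context; objects A and attributes B are the (nonempty) types.\<close>
definition normalized :: "('o \<Rightarrow> 'at \<Rightarrow> 'c::order_bot) \<Rightarrow> bool" where
  "normalized R \<longleftrightarrow>
     (\<forall>a. (\<exists>b1. R a b1 \<noteq> bot) \<and> (\<exists>b2. R a b2 = bot)) \<and>
     (\<forall>b. (\<exists>a1. R a1 b \<noteq> bot) \<and> (\<exists>a2. R a2 b = bot))"

definition up_op ::
  "(nat \<Rightarrow> 'c \<Rightarrow> 'b \<Rightarrow> 'a::complete_lattice) \<Rightarrow> ('o \<Rightarrow> 'at \<Rightarrow> nat) \<Rightarrow>
   ('o \<Rightarrow> 'at \<Rightarrow> 'c) \<Rightarrow> ('at \<Rightarrow> 'b) \<Rightarrow> ('o \<Rightarrow> 'a)"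
where
  "up_op sw \<sigma> R g = (\<lambda>a. Inf {sw (\<sigma> a b) (R a b) (g b) | b. True})"

definition down_op ::
  "(nat \<Rightarrow> 'c \<Rightarrow> 'a \<Rightarrow> 'b::complete_lattice) \<Rightarrow> ('o \<Rightarrow> 'at \<Rightarrow> nat) \<Rightarrow>
   ('o \<Rightarrow> 'at \<Rightarrow> 'c) \<Rightarrow> ('o \<Rightarrow> 'a) \<Rightarrow> ('at \<Rightarrow> 'b)"
where
  "down_op nw \<sigma> R f = (\<lambda>b. Inf {nw (\<sigma> a b) (R a b) (f a) | a. True})"

definition upN_op ::
  "(nat \<Rightarrow> 'b \<Rightarrow> 'c \<Rightarrow> 'a::complete_lattice) \<Rightarrow> ('o \<Rightarrow> 'at \<Rightarrow> nat) \<Rightarrow>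
   ('o \<Rightarrow> 'at \<Rightarrow> 'c) \<Rightarrow> ('at \<Rightarrow> 'b) \<Rightarrow> ('o \<Rightarrow> 'a)"
where
  "upN_op swo \<sigma>o R g = (\<lambda>a. Inf {swo (\<sigma>o a b) (g b) (R a b) | b. True})"

definition downN_op ::
  "(nat \<Rightarrow> 'a \<Rightarrow> 'c \<Rightarrow> 'b::complete_lattice) \<Rightarrow> ('o \<Rightarrow> 'at \<Rightarrow> nat) \<Rightarrow>
   ('o \<Rightarrow> 'at \<Rightarrow> 'c) \<Rightarrow> ('o \<Rightarrow> 'a) \<Rightarrow> ('at \<Rightarrow> 'b)"
where
  "downN_op nwp \<sigma>p R f = (\<lambda>b. Inf {nwp (\<sigma>p a b) (f a) (R a b) | a. True})"

definition chi :: "'x set \<Rightarrow> 'x \<Rightarrow> 'l::complete_lattice" where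
  "chi X = (\<lambda>x. if x \<in> X then top else bot)"

definition MAC ::
  "(nat \<Rightarrow> 'c \<Rightarrow> 'b \<Rightarrow> 'a::complete_lattice) \<Rightarrow> (nat \<Rightarrow> 'c \<Rightarrow> 'a \<Rightarrow> 'b::complete_lattice) \<Rightarrow>
   ('o \<Rightarrow> 'at \<Rightarrow> nat) \<Rightarrow> ('o \<Rightarrow> 'at \<Rightarrow> 'c) \<Rightarrow> (('at \<Rightarrow> 'b) \<times> ('o \<Rightarrow> 'a)) set"
where
  "MAC sw nw \<sigma> R = {(g, f). up_op sw \<sigma> R g = f \<and> down_op nw \<sigma> R f = g}"

definition FN ::
  "(nat \<Rightarrow> 'b \<Rightarrow> 'c \<Rightarrow> 'a::complete_lattice) \<Rightarrow> ('o \<Rightarrow> 'at \<Rightarrow> nat) \<Rightarrow>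
   (nat \<Rightarrow> 'a \<Rightarrow> 'c \<Rightarrow> 'b::complete_lattice) \<Rightarrow> ('o \<Rightarrow> 'at \<Rightarrow> nat) \<Rightarrow>
   ('o \<Rightarrow> 'at \<Rightarrow> 'c) \<Rightarrow> (('at \<Rightarrow> 'b) \<times> ('o \<Rightarrow> 'a)) set"
where
  "FN swo \<sigma>o nwp \<sigma>p R = {(g, f). upN_op swo \<sigma>o R g = f \<and> downN_op nwp \<sigma>p R f = g}"

definition FC ::
  "(nat \<Rightarrow> 'b \<Rightarrow> 'c \<Rightarrow> 'a::complete_lattice) \<Rightarrow> ('o \<Rightarrow> 'at \<Rightarrow> nat) \<Rightarrow>
   (nat \<Rightarrow> 'a \<Rightarrow> 'c \<Rightarrow> 'b::complete_lattice) \<Rightarrow> ('o \<Rightarrow> 'at \<Rightarrow> nat) \<Rightarrow>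
   ('o \<Rightarrow> 'at \<Rightarrow> 'c) \<Rightarrow> (('at \<Rightarrow> 'b) \<times> ('o \<Rightarrow> 'a)) set"
where
  "FC swo \<sigma>o nwp \<sigma>p R =
     {(chi X, chi Y) | X Y. (chi X, chi Y) \<in> FN swo \<sigma>o nwp \<sigma>p R \<and>
        X \<noteq> {} \<and> X \<noteq> UNIV \<and> Y \<noteq> {} \<and> Y \<noteq> UNIV}"

definition concept_le :: "(('at \<Rightarrow> 'b::order) \<times> ('o \<Rightarrow> 'a)) \<Rightarrow> (('at \<Rightarrow> 'b) \<times> ('o \<Rightarrow> 'a)) \<Rightarrow> bool" where
  "concept_le p q \<longleftrightarrow> fst p \<le> fst q"

end

theory Submission
  imports Defs
begin

theorem mainTheorem15:
  fixes cj :: "nat \<Rightarrow> 'a::complete_lattice \<Rightarrow> 'b::complete_lattice \<Rightarrow> 'c::{order_bot,order_top}"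
    and sw :: "nat \<Rightarrow> 'c \<Rightarrow> 'b \<Rightarrow> 'a"
    and nw :: "nat \<Rightarrow> 'c \<Rightarrow> 'a \<Rightarrow> 'b"
    and cjp :: "nat \<Rightarrow> 'c \<Rightarrow> 'b \<Rightarrow> 'a"
    and swp :: "nat \<Rightarrow> 'a \<Rightarrow> 'b \<Rightarrow> 'c"
    and nwp :: "nat \<Rightarrow> 'a \<Rightarrow> 'c \<Rightarrow> 'b"
    and cjo :: "nat \<Rightarrow> 'a \<Rightarrow> 'c \<Rightarrow> 'b"
    and swo :: "nat \<Rightarrow> 'b \<Rightarrow> 'c \<Rightarrow> 'a"
    and nwo :: "nat \<Rightarrow> 'b \<Rightarrow> 'a \<Rightarrow> 'c"
    and n m s :: nat
    and R :: "'o \<Rightarrow> 'at \<Rightarrow> 'c"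
    and \<sigma> \<sigma>p \<sigma>o :: "'o \<Rightarrow> 'at \<Rightarrow> nat"
    and g :: "'at \<Rightarrow> 'b" and f :: "'o \<Rightarrow> 'a"
  assumes "frame n cj sw nw"
    and "frame m cjp swp nwp"
    and "frame s cjo swo nwo"
    and "\<forall>a b. \<sigma> a b \<in> {1..n} \<and> \<sigma>p a b \<in> {1..m} \<and> \<sigma>o a b \<in> {1..s}"
    and "normalized R"
    and "(g, f) \<in> FC swo \<sigma>o nwp \<sigma>p R"
    and "up_op sw \<sigma> R g \<noteq> (\<lambda>_. bot)"
    and "down_op nw \<sigma> R f \<noteq> (\<lambda>_. bot)"
  shows "(down_op nw \<sigma> R f, f) \<in> MAC sw nw \<sigma> R
       \<and> (g, up_op sw \<sigma> R g) \<in> MAC sw nw \<sigma> R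
       \<and> concept_le (down_op nw \<sigma> R f, f) (g, up_op sw \<sigma> R g)"
proof -
  let ?F = "down_op nw \<sigma> R f" and ?G = "up_op sw \<sigma> R g"
  have S1: "\<And>x y z a b. x \<le> sw (\<sigma> a b) z y \<longleftrightarrow> cj (\<sigma> a b) x y \<le> z"
    and S2: "\<And>x y z a b. cj (\<sigma> a b) x y \<le> z \<longleftrightarrow> y \<le> nw (\<sigma> a b) z x"
    and SZ: "\<And>x y a b. x \<noteq> bot \<Longrightarrow> y \<noteq> bot \<Longrightarrow> cj (\<sigma> a b) x y \<noteq> bot"
    using assms(1,4) unfolding frame_def adjoint_triple_def no_zero_divisors_def by blast+
  have P2: "\<And>x y z a b. cjp (\<sigma>p a b) x y \<le> z \<longleftrightarrow> y \<le> nwp (\<sigma>p a b) z x"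
    and PZ: "\<And>x y a b. x \<noteq> bot \<Longrightarrow> y \<noteq> bot \<Longrightarrow> cjp (\<sigma>p a b) x y \<noteq> bot"
    using assms(2,4) unfolding frame_def adjoint_triple_def no_zero_divisors_def by blast+
  have O1: "\<And>x y z a b. x \<le> swo (\<sigma>o a b) z y \<longleftrightarrow> cjo (\<sigma>o a b) x y \<le> z"
    and OZ: "\<And>x y a b. x \<noteq> bot \<Longrightarrow> y \<noteq> bot \<Longrightarrow> cjo (\<sigma>o a b) x y \<noteq> bot"
    using assms(3,4) unfolding frame_def adjoint_triple_def no_zero_divisors_def by blast+
  obtain X Y where gX: "g = chi X" and fY: "f = chi Y" and FNm: "(chi X, chi Y) \<in> FN swo \<sigma>o nwp \<sigma>p R"
    and Xne: "X \<noteq> {}" and Yne: "Y \<noteq> {}"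
    using assms(6) unfolding FC_def by blast
  have topa: "(top::'a) \<noteq> bot"
  proof
    assume h: "(top::'a) = bot"
    have "\<And>x::'a. x = bot" by (metis h top_greatest bot.extremum_uniqueI)
    then show False using assms(7) by auto
  qed
  have topb: "(top::'b) \<noteq> bot"
  proof
    assume h: "(top::'b) = bot"
    have "\<And>x::'b. x = bot" by (metis h top_greatest bot.extremum_uniqueI)
    then show False using assms(8) by auto
  qed
  have gv: "\<And>b. g b = (if b \<in> X then top else bot)" unfolding gX chi_def by simp
  have fv: "\<And>a. f a = (if a \<in> Y then top else bot)" unfolding fY chi_def by simp
  have fE: "upN_op swo \<sigma>o R g = f" and gE: "downN_op nwp \<sigma>p R f = g"
    using FNm unfolding FN_def gX fY by auto
  have R1: "R a b = bot" if "a \<in> Y" "b \<notin> X" for a b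
  proof -
    have "top = Inf {swo (\<sigma>o a b) (g b) (R a b) | b. True}"
      using fE that fv unfolding upN_op_def by (metis (mono_tags, lifting))
    also have "\<dots> \<le> swo (\<sigma>o a b) (g b) (R a b)" by (rule Inf_lower) blast
    finally have "cjo (\<sigma>o a b) top (R a b) \<le> bot" using O1 that gv by (metis top.extremum_unique)
    then show ?thesis using OZ topa bot.extremum_uniqueI by blast
  qed
  have R2: "R a b = bot" if "a \<notin> Y" "b \<in> X" for a b
  proof -
    have "top = Inf {nwp (\<sigma>p a b) (f a) (R a b) | a. True}"
      using gE that gv unfolding downN_op_def by (metis (mono_tags, lifting))
    also have "\<dots> \<le> nwp (\<sigma>p a b) (f a) (R a b)" by (rule Inf_lower) blast
    finally have "cjp (\<sigma>p a b) (R a b) top \<le> bot" using P2 that fv by (metis top.extremum_unique)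
    then show ?thesis using PZ topb bot.extremum_uniqueI by blast
  qed
  have cjbot: "cj (\<sigma> a b) bot y = bot" for a b y
    using S1[where x=bot and y=y and z=bot and a=a and b=b] by (simp add: bot.extremum_unique)
  have Fle_nw: "?F b \<le> nw (\<sigma> a b) (R a b) (f a)" for a b
    unfolding down_op_def by (rule Inf_lower) blast
  have Gle_sw: "?G a \<le> sw (\<sigma> a b) (R a b) (g b)" for a b
    unfolding up_op_def by (rule Inf_lower) blast
  have F0: "?F b = bot" if "b \<notin> X" for b
  proof -
    obtain a where a: "a \<in> Y" using Yne by blast
    have "?F b \<le> nw (\<sigma> a b) bot top" using Fle_nw[of b a] R1[OF a that] fv a by simp
    then have "cj (\<sigma> a b) top (?F b) \<le> bot" using S2 by blast
    then show ?thesis using SZ topa bot.extremum_uniqueI by blast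
  qed
  have G0: "?G a = bot" if "a \<notin> Y" for a
  proof -
    obtain b where b: "b \<in> X" using Xne by blast
    have "?G a \<le> sw (\<sigma> a b) bot top" using Gle_sw[of a b] R2[OF that b] gv b by simp
    then have "cj (\<sigma> a b) (?G a) top \<le> bot" using S1 by blast
    then show ?thesis using SZ topb bot.extremum_uniqueI by blast
  qed
  have Fleg: "?F \<le> g"
  proof (rule le_funI)
    fix b show "?F b \<le> g b" using F0[of b] gv[of b] by (cases "b \<in> X") auto
  qed
  have upF: "up_op sw \<sigma> R ?F = f"
  proof (rule ext)
    fix a
    show "up_op sw \<sigma> R ?F a = f a"
    proof (cases "a \<in> Y")
      case True
      have "top \<le> up_op sw \<sigma> R ?F a"
        unfolding up_op_def
      proof (rule Inf_greatest, clarify)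
        fix b
        have "?F b \<le> nw (\<sigma> a b) (R a b) top" using Fle_nw[of b a] fv True by simp
        then have "cj (\<sigma> a b) top (?F b) \<le> R a b" using S2 by blast
        then show "top \<le> sw (\<sigma> a b) (R a b) (?F b)" using S1 by blast
      qed
      then show ?thesis using True fv top.extremum_unique by metis
    next
      case False
      obtain b0 where b0: "?F b0 \<noteq> bot" using assms(8) by auto
      have X0: "b0 \<in> X" using F0 b0 by blast
      have Rb: "R a b0 = bot" using R2[OF False X0] .
      let ?s = "sw (\<sigma> a b0) bot (?F b0)"
      have "cj (\<sigma> a b0) ?s (?F b0) \<le> bot" using S1 by blast
      then have s0: "?s = bot" using SZ b0 bot.extremum_uniqueI by blast
      have "up_op sw \<sigma> R ?F a \<le> ?s" unfolding up_op_def
        by (rule Inf_lower, rule CollectI, rule exI[of _ b0], simp add: Rb)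
      then show ?thesis using s0 False fv bot.extremum_uniqueI by metis
    qed
  qed
  have downG: "down_op nw \<sigma> R ?G = g"
  proof (rule ext)
    fix b
    show "down_op nw \<sigma> R ?G b = g b"
    proof (cases "b \<in> X")
      case True
      have "top \<le> down_op nw \<sigma> R ?G b"
        unfolding down_op_def
      proof (rule Inf_greatest, clarify)
        fix a
        show "top \<le> nw (\<sigma> a b) (R a b) (?G a)"
        proof (cases "a \<in> Y")
          case True2: True
          have "?G a \<le> sw (\<sigma> a b) (R a b) top" using Gle_sw[of a b] gv True by simp
          then have "cj (\<sigma> a b) (?G a) top \<le> R a b" using S1 by blast
          then show ?thesis using S2 by blast
        next
          case False
          then show ?thesis using G0 cjbot S2 by (metis bot.extremum)
        qed
      qed
      then show ?thesis using True gv top.extremum_unique by metis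
    next
      case False
      obtain a0 where a0: "?G a0 \<noteq> bot" using assms(7) by auto
      have Y0: "a0 \<in> Y" using G0 a0 by blast
      have Rb: "R a0 b = bot" using R1[OF Y0 False] .
      let ?t = "nw (\<sigma> a0 b) bot (?G a0)"
      have "cj (\<sigma> a0 b) (?G a0) ?t \<le> bot" using S2 by blast
      then have t0: "?t = bot" using SZ a0 bot.extremum_uniqueI by blast
      have "down_op nw \<sigma> R ?G b \<le> ?t" unfolding down_op_def
        by (rule Inf_lower, rule CollectI, rule exI[of _ a0], simp add: Rb)
      then show ?thesis using t0 False gv bot.extremum_uniqueI by metis
    qed
  qed
  show ?thesis
    unfolding MAC_def concept_le_def using upF downG Fleg by auto
qed

end
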